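(* Let $t\ge1$ be an integer and let $p(\cdot\mid\cdot)$ be the transition probability density on $\mathbb{R}$ given by $$p(\mu_i\mid\mu_{i-1})=c_t\left(1+\frac{\mu_{i-1}^2}{t}\right)^{t/2}\left(1+\frac{\mu_{i-1}^2}{t}+\frac{\mu_i^2}{t}\right)^{-(t+1)/2},$$ where $c_t$ is the normalizing constant (depending only on $t$); equivalently, given $\mu_{i-1}$, the variable $\mu_i(1+\mu_{i-1}^2/t)^{-1/2}$ has the Student t distribution with $t$ degrees of freedom. Let $a>0$, set $$h(a)=\left\{a^2\left[\left(1+\frac{a^2}{t}\right)^{t/(t+1)}-1\right]^{-1}-t\right\}^{1/2},$$ and define the subprobability density $$p_{\min}(\mu)=\begin{cases}p(\mu\mid a)&\text{for }|\mu|\le h(a),\\ p(\mu\mid 0)&\text{for }|\mu|>h(a).\end{cases}$$ Then $|\mu_{i-1}|\le a$ implies $p(\mu_i\mid\mu_{i-1})\ge p_{\min}(\mu_i)$ for all $\mu_i$. Consequently, letting $\nu$ be the probability measure with density $p_{\min}/\beta$, the transition kernel $P$ with density $p(\cdot\mid\cdot)$ satisfies $P(x,\cdot)\ge\beta\mathbf{1}(x\in J)\nu(\cdot)$ for all $x$, with $J=[-a,a]$ and $$\beta=1-\Pr\left(|\vartheta|\le h(a)\right)+\Pr\left(|\vartheta|\le\left(1+\frac{a^2}{t}\right)^{-1/2}h(a)\right),$$ where $\vartheta$ has the Student t distribution with $t$ degrees of freedom.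
   Context: This is the transition density of the $\mu$-marginal of the two-step Gibbs sampler for the posterior of $(\mu,\kappa)$ in a normal model $N(\mu,\kappa^{-1})$ with $t$ observations, prior $p(\mu,\kappa)\propto\kappa^{-1}$, normalized to sample mean $0$ and $s^2=t$. *)

theory Defs
  imports "HOL-Probability.Probability"
begin

text \<open>Since the substitution y = (1 + x^2/t)^(1/2) u shows that the integral of the
  unnormalized density does not depend on x, we normalize at x = 0.\<close>
definition gibbs_const :: "nat \<Rightarrow> real" where
  "gibbs_const t =
     1 / (\<integral>y. (1 + y\<^sup>2 / real t) powr (-(real t + 1) / 2) \<partial>lborel)"

definition gibbs_p :: "nat \<Rightarrow> real \<Rightarrow> real \<Rightarrow> real" where
  "gibbs_p t x y = gibbs_const t * (1 + x\<^sup>2 / real t) powr (real t / 2)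
      * (1 + x\<^sup>2 / real t + y\<^sup>2 / real t) powr (-(real t + 1) / 2)"

definition student_t_density :: "nat \<Rightarrow> real \<Rightarrow> real" where
  "student_t_density t y = Gamma ((real t + 1) / 2) / (sqrt (real t * pi) * Gamma (real t / 2))
      * (1 + y\<^sup>2 / real t) powr (-(real t + 1) / 2)"

definition student_t :: "nat \<Rightarrow> real measure" where
  "student_t t = density lborel (\<lambda>y. ennreal (student_t_density t y))"

definition h_fun :: "nat \<Rightarrow> real \<Rightarrow> real" where
  "h_fun t a = sqrt (a\<^sup>2 / ((1 + a\<^sup>2 / real t) powr (real t / (real t + 1)) - 1) - real t)"

definition p_min :: "nat \<Rightarrow> real \<Rightarrow> real \<Rightarrow> real" where
  "p_min t a y = (if \<bar>y\<bar> \<le> h_fun t a then gibbs_p t a y else gibbs_p t 0 y)"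

definition beta_const :: "nat \<Rightarrow> real \<Rightarrow> real" where
  "beta_const t a = 1 - measure (student_t t) {y. \<bar>y\<bar> \<le> h_fun t a}
      + measure (student_t t) {y. \<bar>y\<bar> \<le> (1 + a\<^sup>2 / real t) powr (-1/2) * h_fun t a}"

definition gibbs_kernel :: "nat \<Rightarrow> real \<Rightarrow> real measure" where
  "gibbs_kernel t x = density lborel (\<lambda>y. ennreal (gibbs_p t x y))"

definition nu_meas :: "nat \<Rightarrow> real \<Rightarrow> real measure" where
  "nu_meas t a = density lborel (\<lambda>y. ennreal (p_min t a y / beta_const t a))"

end

theory Submission
  imports Defs
begin

lemma gamma_scaled:
  fixes s l :: real assumes s: "s > 0" and l: "l > 0"
  shows "(\<integral>\<^sup>+x. ennreal (indicator {0..} x * x powr (s-1) * exp (-(l*x))) \<partial>lborel)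
     = ennreal (Gamma s / l powr s)"
proof -
  have "ennreal (Gamma s) = (\<integral>\<^sup>+x. ennreal (indicator {0..} x * x powr (s - 1) / exp x) \<partial>lborel)"
    using Gamma_conv_nn_integral_real[OF s] by simp
  also have "\<dots> = ennreal l * (\<integral>\<^sup>+x. ennreal (indicator {0..} (0 + l*x) * (0 + l*x) powr (s - 1) / exp (0 + l*x)) \<partial>lborel)"
    using nn_integral_real_affine[of "\<lambda>x. ennreal (indicator {0..} x * x powr (s - 1) / exp x)" l 0] l
    by simp
  also have "(\<lambda>x. ennreal (indicator {0..} (0 + l*x) * (0 + l*x) powr (s - 1) / exp (0 + l*x)))
     = (\<lambda>x. ennreal (l powr (s-1)) * ennreal (indicator {0..} x * x powr (s-1) * exp (-(l*x))))"
  proof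
    fix x :: real
    show "ennreal (indicator {0..} (0 + l*x) * (0 + l*x) powr (s - 1) / exp (0 + l*x))
      = ennreal (l powr (s-1)) * ennreal (indicator {0..} x * x powr (s-1) * exp (-(l*x)))"
    proof (cases "x \<ge> 0")
      case True
      have "(l*x) powr (s-1) = l powr (s-1) * x powr (s-1)" using True l by (simp add: powr_mult)
      then show ?thesis using True l
        by (simp add: ennreal_mult'[symmetric] zero_le_mult_iff exp_minus field_simps)
    next
      case False
      then have "\<not> 0 \<le> l*x" using l by (simp add: zero_le_mult_iff)
      then show ?thesis using False by (simp add: indicator_def)
    qed
  qed
  also have "ennreal l * (\<integral>\<^sup>+x. ennreal (l powr (s-1)) * ennreal (indicator {0..} x * x powr (s-1) * exp (-(l*x))) \<partial>lborel)
    = ennreal (l * l powr (s-1)) * (\<integral>\<^sup>+x. ennreal (indicator {0..} x * x powr (s-1) * exp (-(l*x))) \<partial>lborel)"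
    using l by (simp add: nn_integral_cmult ennreal_mult mult.assoc)
  also have "l * l powr (s-1) = l powr s" using l by (simp add: powr_diff)
  finally have *: "ennreal (Gamma s) = ennreal (l powr s) * (\<integral>\<^sup>+x. ennreal (indicator {0..} x * x powr (s-1) * exp (-(l*x))) \<partial>lborel)" .
  have "ennreal (Gamma s / l powr s) = ennreal (1 / l powr s) * ennreal (Gamma s)"
    using l by (simp add: ennreal_mult'[symmetric])
  also have "\<dots> = (\<integral>\<^sup>+x. ennreal (indicator {0..} x * x powr (s-1) * exp (-(l*x))) \<partial>lborel)"
    unfolding * using l
    by (simp add: ennreal_mult'[symmetric] mult.assoc[symmetric] flip: ennreal_mult)
  finally show ?thesis by simp
qed

lemma gauss_nn:
  fixes c :: real assumes c: "c > 0"
  shows "(\<integral>\<^sup>+y. ennreal (exp (-(c*y\<^sup>2))) \<partial>lborel) = ennreal (sqrt (pi/c))"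
proof -
  define \<sigma> where "\<sigma> = sqrt (1/(2*c))"
  have s2: "\<sigma>\<^sup>2 = 1/(2*c)" using c by (simp add: \<sigma>_def)
  have eq: "(\<lambda>y. ennreal (exp (-(c*y\<^sup>2)))) = (\<lambda>y. ennreal (sqrt (pi/c)) * ennreal (normal_density 0 \<sigma> y))"
  proof
    fix y
    have "normal_density 0 \<sigma> y = 1 / sqrt (pi/c) * exp (-(c*y\<^sup>2))"
      unfolding normal_density_def s2 using c by (simp add: field_simps)
    then show "ennreal (exp (-(c*y\<^sup>2))) = ennreal (sqrt (pi/c)) * ennreal (normal_density 0 \<sigma> y)"
      using c by (simp add: ennreal_mult'[symmetric])
  qed
  have "(\<integral>\<^sup>+y. ennreal (normal_density 0 \<sigma> y) \<partial>lborel) = 1"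
    by (subst nn_integral_eq_integral) (use integrable_normal_density[of \<sigma> 0] integral_normal_density[of \<sigma> 0] c in \<open>auto simp: \<sigma>_def\<close>)
  then show ?thesis unfolding eq by (simp add: nn_integral_cmult)
qed

lemma student_norm:
  fixes t :: nat assumes t: "t \<ge> 1"
  shows "(\<integral>\<^sup>+y. ennreal ((1 + y\<^sup>2 / real t) powr (-(real t + 1) / 2)) \<partial>lborel)
     = ennreal (sqrt (real t * pi) * Gamma (real t / 2) / Gamma ((real t + 1) / 2))"
proof -
  define s where "s = (real t + 1) / 2"
  have tpos: "real t > 0" using t by simp
  have spos: "s > 0" unfolding s_def by simp
  have Gs: "Gamma s > 0" using spos by (simp add: Gamma_real_pos)
  define F where "F = (\<lambda>x y::real. indicator {0..} x * x powr (s-1) * exp (-((1 + y\<^sup>2 / real t)*x)))"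
  have F_meas[measurable]: "case_prod F \<in> borel_measurable (lborel \<Otimes>\<^sub>M lborel)"
    unfolding F_def by measurable
  have step1: "(\<integral>\<^sup>+x. ennreal (F x y) \<partial>lborel) = ennreal (Gamma s) * ennreal ((1 + y\<^sup>2 / real t) powr (-(real t + 1) / 2))" for y
  proof -
    have l: "1 + y\<^sup>2 / real t > 0" using tpos by (simp add: add_pos_nonneg)
    have "(\<integral>\<^sup>+x. ennreal (F x y) \<partial>lborel) = ennreal (Gamma s / (1 + y\<^sup>2 / real t) powr s)"
      unfolding F_def by (rule gamma_scaled[OF spos l])
    also have "Gamma s / (1 + y\<^sup>2 / real t) powr s = Gamma s * (1 + y\<^sup>2 / real t) powr (-(real t + 1) / 2)"
    proof -
      have ex: "-(real t + 1) / 2 = -s" unfolding s_def by (simp add: field_simps)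
      show ?thesis unfolding ex powr_minus by (simp add: divide_inverse)
    qed
    finally show ?thesis using Gs by (simp add: ennreal_mult'')
  qed
  have step3: "(\<integral>\<^sup>+y. ennreal (F x y) \<partial>lborel) = ennreal (sqrt (real t * pi) * (indicator {0..} x * x powr (real t / 2 - 1) / exp x))" for x
  proof (cases "x > 0")
    case False
    then have "x < 0 \<or> x = 0" by auto
    then show ?thesis by (auto simp: F_def indicator_def)
  next
    case True
    have c: "x / real t > 0" using True tpos by simp
    have eqF: "(\<lambda>y. ennreal (F x y)) = (\<lambda>y. ennreal (x powr (s-1) * exp (-x)) * ennreal (exp (-((x / real t)*y\<^sup>2))))"
    proof
      fix y
      have "-((1 + y\<^sup>2 / real t)*x) = -x + (-((x / real t)*y\<^sup>2))" by (simp add: field_simps)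
      then have e: "exp (-((1 + y\<^sup>2 / real t)*x)) = exp (-x) * exp (-((x / real t)*y\<^sup>2))"
        by (metis exp_add)
      show "ennreal (F x y) = ennreal (x powr (s-1) * exp (-x)) * ennreal (exp (-((x / real t)*y\<^sup>2)))"
        using True unfolding F_def e by (simp add: ennreal_mult'[symmetric] mult.assoc)
    qed
    have "(\<integral>\<^sup>+y. ennreal (F x y) \<partial>lborel) = ennreal (x powr (s-1) * exp (-x)) * ennreal (sqrt (pi / (x / real t)))"
      unfolding eqF gauss_nn[OF c, symmetric] by (rule nn_integral_cmult) measurable
    also have "\<dots> = ennreal (x powr (s-1) * exp (-x) * sqrt (pi / (x / real t)))"
      using True by (simp add: ennreal_mult'[symmetric])
    also have "x powr (s-1) * exp (-x) * sqrt (pi / (x / real t)) = sqrt (real t * pi) * (indicator {0..} x * x powr (real t / 2 - 1) / exp x)"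
    proof -
      have "sqrt (pi / (x / real t)) = sqrt (real t * pi) / x powr (1/2)"
        using True tpos by (simp add: powr_half_sqrt real_sqrt_divide real_sqrt_mult field_simps)
      moreover have "x powr (s-1) / x powr (1/2) = x powr (real t / 2 - 1)"
      proof -
        have "x powr (s-1) / x powr (1/2) = x powr (s - 1 - 1/2)" by (rule powr_diff[symmetric])
        also have "s - 1 - 1/2 = real t / 2 - 1" by (simp add: s_def field_simps)
        finally show ?thesis .
      qed
      ultimately show ?thesis using True
        by (simp add: exp_minus field_simps)
    qed
    finally show ?thesis .
  qed
  have "(\<integral>\<^sup>+y. (\<integral>\<^sup>+x. ennreal (F x y) \<partial>lborel) \<partial>lborel) = (\<integral>\<^sup>+x. (\<integral>\<^sup>+y. ennreal (F x y) \<partial>lborel) \<partial>lborel)"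
    by (rule lborel_pair.Fubini') measurable
  also have "\<dots> = (\<integral>\<^sup>+x. ennreal (sqrt (real t * pi)) * ennreal (indicator {0..} x * x powr (real t / 2 - 1) / exp x) \<partial>lborel)"
    unfolding step3 by (intro nn_integral_cong) (simp add: ennreal_mult'[symmetric])
  also have "\<dots> = ennreal (sqrt (real t * pi)) * ennreal (Gamma (real t / 2))"
    using Gamma_conv_nn_integral_real[of "real t / 2"] tpos by (simp add: nn_integral_cmult)
  finally have A: "ennreal (Gamma s) * (\<integral>\<^sup>+y. ennreal ((1 + y\<^sup>2 / real t) powr (-(real t + 1) / 2)) \<partial>lborel)
      = ennreal (sqrt (real t * pi) * Gamma (real t / 2))"
    unfolding step1 using tpos by (simp add: nn_integral_cmult ennreal_mult Gamma_real_pos)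
  have "(\<integral>\<^sup>+y. ennreal ((1 + y\<^sup>2 / real t) powr (-(real t + 1) / 2)) \<partial>lborel)
     = ennreal (1 / Gamma s) * (ennreal (Gamma s) * (\<integral>\<^sup>+y. ennreal ((1 + y\<^sup>2 / real t) powr (-(real t + 1) / 2)) \<partial>lborel))"
    using Gs by (simp add: mult.assoc[symmetric] ennreal_mult[symmetric])
  also have "\<dots> = ennreal (sqrt (real t * pi) * Gamma (real t / 2) / Gamma s)"
    unfolding A using Gs tpos by (simp add: ennreal_mult[symmetric] Gamma_real_pos)
  finally show ?thesis unfolding s_def .
qed


definition LL :: "real \<Rightarrow> real \<Rightarrow> real \<Rightarrow> real" where
  "LL T v w = T/2 * ln (1+w) - (T+1)/2 * ln (1+w+v)"

lemma LL_deriv: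
  assumes T: "T > 0" and v: "v \<ge> 0" and w: "w \<ge> 0"
  shows "DERIV (LL T v) w :> (T * v - 1 - w) / (2 * (1+w) * (1+w+v))"
proof -
  have "DERIV (LL T v) w :> T/2 * (1/(1+w)) - (T+1)/2 * (1/(1+w+v))"
    unfolding LL_def using w v
    by (auto intro!: derivative_eq_intros simp: field_simps)
  moreover have "T/2 * (1/(1+w)) - (T+1)/2 * (1/(1+w+v)) = (T * v - 1 - w) / (2 * (1+w) * (1+w+v))"
  proof -
    have g: "T/2 * (1/a) - (T+1)/2 * (1/b) = (T*(b-a)-a)/(2*a*b)" if "a \<noteq> 0" "b \<noteq> 0" for a b :: real
      using that by (simp add: field_simps)
    have "1+w \<noteq> 0" "1+w+v \<noteq> 0" using w v by auto
    from g[OF this] show ?thesis by (simp add: algebra_simps)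
  qed
  ultimately show ?thesis by simp
qed

lemma LL_min:
  assumes T: "T > 0" and v: "v \<ge> 0" and u: "0 \<le> u" "u \<le> A"
  shows "min (LL T v 0) (LL T v A) \<le> LL T v u"
proof (cases "u \<le> T * v - 1")
  case True
  have "LL T v 0 \<le> LL T v u"
  proof (rule DERIV_nonneg_imp_nondecreasing[OF u(1)])
    fix w assume w: "0 \<le> w" "w \<le> u"
    show "\<exists>y. DERIV (LL T v) w :> y \<and> y \<ge> 0"
      using LL_deriv[OF T v w(1)] w True v by (intro exI[of _ "(T * v - 1 - w) / (2 * (1+w) * (1+w+v))"]) auto
  qed
  then show ?thesis by simp
next
  case False
  have "LL T v A \<le> LL T v u"
  proof (rule DERIV_nonpos_imp_nonincreasing[OF u(2)])
    fix w assume w: "u \<le> w" "w \<le> A"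
    have w0: "0 \<le> w" using w u by linarith
    have num: "T * v - 1 - w \<le> 0" using w False by linarith
    have den: "2 * (1+w) * (1+w+v) > 0" using w0 v by (simp add: add_pos_nonneg)
    show "\<exists>y. DERIV (LL T v) w :> y \<and> y \<le> 0"
      using LL_deriv[OF T v w0] num den
      by (intro exI[of _ "(T * v - 1 - w) / (2 * (1+w) * (1+w+v))"]) (simp add: divide_nonpos_pos)
  qed
  then show ?thesis by simp
qed

lemma LL_exp:
  assumes T: "T > 0" and v: "v \<ge> 0" and w: "w \<ge> 0"
  shows "(1 + w) powr (T/2) * (1 + w + v) powr (-(T+1)/2) = exp (LL T v w)"
proof -
  have p1: "1 + w > 0" and p2: "1 + w + v > 0" using v w by auto
  have "(1 + w) powr (T/2) * (1 + w + v) powr (-(T+1)/2) = exp (T/2*ln(1+w)) * exp (-(T+1)/2 * ln(1+w+v))"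
    using p1 p2 by (simp add: powr_def)
  also have "\<dots> = exp (T/2*ln(1+w) + -(T+1)/2 * ln(1+w+v))" by (rule exp_add[symmetric])
  also have "T/2*ln(1+w) + -(T+1)/2 * ln(1+w+v) = LL T v w" unfolding LL_def by (simp only: minus_divide_left[symmetric] mult_minus_left diff_conv_add_uminus)
  finally show ?thesis .
qed

lemma LL_threshold:
  assumes T: "T > 0" and v: "v \<ge> 0" and A: "A > 0"
  defines "P \<equiv> (1 + A) powr (T/(T+1))"
  shows "P > 1" "P \<le> 1 + A" "LL T v A \<le> LL T v 0 \<longleftrightarrow> v \<le> A / (P - 1) - 1"
proof -
  have P1: "P > 1" unfolding P_def using A T by (intro gr_one_powr) auto
  show "P > 1" by fact
  have "P \<le> (1+A) powr 1" unfolding P_def using A T by (intro powr_mono) auto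
  then show "P \<le> 1 + A" using A by simp
  have lnP: "ln P = T/(T+1) * ln (1+A)" unfolding P_def using A by (simp add: ln_powr)
  have "LL T v A \<le> LL T v 0 \<longleftrightarrow> T/(T+1) * ln (1+A) + ln (1+v) \<le> ln (1+A+v)"
  proof -
    have "LL T v A \<le> LL T v 0 \<longleftrightarrow> (2/(T+1)) * (T/2 * ln (1+A)) + ln (1+v) \<le> ln (1+A+v)"
      unfolding LL_def using T by (simp add: field_simps)
    also have "(2/(T+1)) * (T/2 * ln (1+A)) = T/(T+1) * ln (1+A)" using T by (simp add: field_simps)
    finally show ?thesis .
  qed
  also have "\<dots> \<longleftrightarrow> ln (P * (1+v)) \<le> ln (1+A+v)"
    using P1 v by (simp add: ln_mult lnP)
  also have "\<dots> \<longleftrightarrow> P * (1+v) \<le> 1+A+v"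
    using P1 v A by (intro ln_le_cancel_iff) auto
  also have "\<dots> \<longleftrightarrow> v * (P - 1) \<le> A - (P - 1)" by (simp add: algebra_simps)
  also have "\<dots> \<longleftrightarrow> v \<le> (A - (P - 1)) / (P - 1)" using P1 by (simp add: field_simps)
  also have "(A - (P - 1)) / (P - 1) = A / (P - 1) - 1" using P1 by (simp add: field_simps)
  finally show "LL T v A \<le> LL T v 0 \<longleftrightarrow> v \<le> A / (P - 1) - 1" .
qed


lemma k_meas[measurable]: "(\<lambda>y::real. (1 + y\<^sup>2 / real t) powr (-(real t + 1) / 2)) \<in> borel_measurable borel"
  by measurable

lemma gconst:
  assumes t: "t \<ge> 1"
  shows "gibbs_const t = Gamma ((real t + 1) / 2) / (sqrt (real t * pi) * Gamma (real t / 2))"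
proof -
  have "(\<integral>y. (1 + y\<^sup>2 / real t) powr (-(real t + 1) / 2) \<partial>lborel)
      = enn2real (\<integral>\<^sup>+y. ennreal ((1 + y\<^sup>2 / real t) powr (-(real t + 1) / 2)) \<partial>lborel)"
    by (rule integral_eq_nn_integral) auto
  also have "\<dots> = sqrt (real t * pi) * Gamma (real t / 2) / Gamma ((real t + 1) / 2)"
    unfolding student_norm[OF t] using t by (simp add: Gamma_real_pos)
  finally show ?thesis unfolding gibbs_const_def by simp
qed

lemma gconst_pos: "t \<ge> 1 \<Longrightarrow> gibbs_const t > 0"
  by (simp add: gconst Gamma_real_pos)

lemma stud_dens: "t \<ge> 1 \<Longrightarrow> student_t_density t y = gibbs_const t * (1 + y\<^sup>2 / real t) powr (-(real t + 1) / 2)"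
  unfolding student_t_density_def by (simp add: gconst)

lemma gp0: "gibbs_p t 0 y = gibbs_const t * (1 + y\<^sup>2 / real t) powr (-(real t + 1) / 2)"
  unfolding gibbs_p_def by simp

lemma gp0': "t \<ge> 1 \<Longrightarrow> gibbs_p t 0 y = student_t_density t y"
  by (simp add: gp0 stud_dens)

lemma gpa:
  assumes t: "t \<ge> 1"
  shows "gibbs_p t a y = (1 + a\<^sup>2 / real t) powr (-1/2) * student_t_density t (y / sqrt (1 + a\<^sup>2 / real t))"
proof -
  define B where "B = 1 + a\<^sup>2 / real t"
  have B: "B \<ge> 1" unfolding B_def by simp
  have eq: "1 + a\<^sup>2 / real t + y\<^sup>2 / real t = B * (1 + (y / sqrt B)\<^sup>2 / real t)"
  proof -
    have sq: "(y / sqrt B)\<^sup>2 = y\<^sup>2 / B" using B by (simp add: power_divide)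
    have "1 + a\<^sup>2 / real t + y\<^sup>2 / real t = B + y\<^sup>2 / real t" by (simp add: B_def)
    also have "\<dots> = B * (1 + (y\<^sup>2 / B) / real t)" using B by (simp add: field_simps)
    also have "\<dots> = B * (1 + (y / sqrt B)\<^sup>2 / real t)" using sq by simp
    finally show ?thesis .
  qed
  have "gibbs_p t a y = gibbs_const t * (B powr (real t / 2) * B powr (-(real t + 1) / 2))
        * (1 + (y / sqrt B)\<^sup>2 / real t) powr (-(real t + 1) / 2)"
    unfolding gibbs_p_def eq using B by (subst powr_mult) (auto simp: B_def[symmetric])
  also have "B powr (real t / 2) * B powr (-(real t + 1) / 2) = B powr (-1/2)"
    by (simp add: powr_add[symmetric] field_simps)
  finally show ?thesis unfolding stud_dens[OF t] B_def by simp
qed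

lemma gp_pos: assumes "t \<ge> 1" shows "gibbs_p t x y > 0"
proof -
  have "0 < 1 + x\<^sup>2 / real t" by (intro add_pos_nonneg) auto
  moreover have "0 < 1 + x\<^sup>2 / real t + y\<^sup>2 / real t" by (intro add_pos_nonneg) auto
  ultimately show ?thesis
    unfolding gibbs_p_def using gconst_pos[of t] \<open>t \<ge> 1\<close> by (intro mult_pos_pos) auto
qed

lemma gp_meas[measurable]: "(\<lambda>y. gibbs_p t x y) \<in> borel_measurable borel"
  unfolding gibbs_p_def by measurable

lemma pmin_meas[measurable]: "p_min t a \<in> borel_measurable borel"
  unfolding p_min_def[abs_def] by measurable

lemma gp_LL: "t \<ge> 1 \<Longrightarrow> gibbs_p t z y = gibbs_const t * exp (LL (real t) (y\<^sup>2 / real t) (z\<^sup>2 / real t))"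
  unfolding gibbs_p_def using LL_exp[of "real t" "y\<^sup>2 / real t" "z\<^sup>2 / real t"]
  by (simp add: mult.assoc)

lemma h_iff:
  assumes t: "t \<ge> 1" and a: "a > 0"
  shows "\<bar>y\<bar> \<le> h_fun t a \<longleftrightarrow> LL (real t) (y\<^sup>2 / real t) (a\<^sup>2 / real t) \<le> LL (real t) (y\<^sup>2 / real t) 0"
proof -
  define T where "T = real t"
  define A where "A = a\<^sup>2 / T"
  define P where "P = (1 + A) powr (T/(T+1))"
  have T: "T > 0" using t by (simp add: T_def)
  have A: "A > 0" using a T by (simp add: A_def)
  have v: "y\<^sup>2 / T \<ge> 0" using T by simp
  note th = LL_threshold[OF T v A, folded P_def]
  define m where "m = A / (P - 1) - 1"
  have m: "m \<ge> 0" using th(1,2) unfolding m_def by (simp add: field_simps)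
  have hm: "h_fun t a = sqrt (T * m)"
    unfolding h_fun_def m_def P_def A_def T_def using t th(1)
    by (simp add: field_simps P_def A_def T_def)
  have "\<bar>y\<bar> \<le> h_fun t a \<longleftrightarrow> y\<^sup>2 \<le> T * m"
    unfolding hm using T m by (metis abs_ge_zero real_sqrt_abs real_sqrt_le_iff)
  also have "\<dots> \<longleftrightarrow> y\<^sup>2 / T \<le> m" using T by (simp add: field_simps)
  also have "\<dots> \<longleftrightarrow> LL T (y\<^sup>2 / T) A \<le> LL T (y\<^sup>2 / T) 0" using th(3) unfolding m_def by simp
  finally show ?thesis unfolding T_def A_def .
qed

lemma pointwise:
  assumes t: "t \<ge> 1" and a: "a > 0" and x: "\<bar>x\<bar> \<le> a"
  shows "p_min t a y \<le> gibbs_p t x y"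
proof -
  define T where "T = real t"
  have T: "T > 0" using t by (simp add: T_def)
  define v where "v = y\<^sup>2 / T"
  have v: "v \<ge> 0" using T by (simp add: v_def)
  have xa: "x\<^sup>2 \<le> a\<^sup>2" using x by (metis abs_ge_zero abs_le_square_iff order_trans abs_of_pos a order_refl)
  have u: "0 \<le> x\<^sup>2 / T" "x\<^sup>2 / T \<le> a\<^sup>2 / T" using T xa by (auto intro: divide_right_mono)
  have mn: "min (LL T v 0) (LL T v (a\<^sup>2/T)) \<le> LL T v (x\<^sup>2/T)" by (rule LL_min[OF T v u])
  have c: "gibbs_const t > 0" using gconst_pos[OF t] .
  have gx: "gibbs_p t x y = gibbs_const t * exp (LL T v (x\<^sup>2/T))" unfolding T_def v_def by (rule gp_LL[OF t])
  have ga: "gibbs_p t a y = gibbs_const t * exp (LL T v (a\<^sup>2/T))" unfolding T_def v_def by (rule gp_LL[OF t])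
  have g0: "gibbs_p t 0 y = gibbs_const t * exp (LL T v 0)" using gp_LL[OF t, of 0 y] unfolding T_def v_def by simp
  show ?thesis
  proof (cases "\<bar>y\<bar> \<le> h_fun t a")
    case True
    then have "LL T v (a\<^sup>2/T) \<le> LL T v 0" using h_iff[OF t a] unfolding T_def v_def by simp
    then have "LL T v (a\<^sup>2/T) \<le> LL T v (x\<^sup>2/T)" using mn by simp
    then show ?thesis using True c unfolding p_min_def gx ga by simp
  next
    case False
    then have "\<not> LL T v (a\<^sup>2/T) \<le> LL T v 0" using h_iff[OF t a] unfolding T_def v_def by simp
    then have "LL T v 0 \<le> LL T v (x\<^sup>2/T)" using mn by simp
    then show ?thesis using False c unfolding p_min_def gx g0 by simp
  qed
qed

lemma st_meas[measurable]: "student_t_density t \<in> borel_measurable borel"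
  unfolding student_t_density_def[abs_def] by measurable

lemma student_prob:
  assumes t: "t \<ge> 1"
  shows "prob_space (student_t t)"
proof (rule prob_spaceI)
  have "emeasure (student_t t) (space (student_t t)) = (\<integral>\<^sup>+y. ennreal (student_t_density t y) \<partial>lborel)"
    unfolding student_t_def by (simp add: emeasure_density)
  also have "\<dots> = (\<integral>\<^sup>+y. ennreal (gibbs_const t) * ennreal ((1 + y\<^sup>2 / real t) powr (-(real t + 1) / 2)) \<partial>lborel)"
    using gconst_pos[OF t] by (intro nn_integral_cong) (simp add: stud_dens[OF t] ennreal_mult)
  also have "\<dots> = ennreal (gibbs_const t) * ennreal (sqrt (real t * pi) * Gamma (real t / 2) / Gamma ((real t + 1) / 2))"
    unfolding student_norm[OF t, symmetric] by (rule nn_integral_cmult) measurable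
  also have "\<dots> = 1"
  proof -
    have g1: "Gamma (real t / 2) > 0" using t by (intro Gamma_real_pos) simp
    have g2: "Gamma ((real t + 1) / 2) > 0" by (intro Gamma_real_pos) simp
    have g1': "Gamma (real t / 2) \<noteq> 0" and g2': "Gamma ((real t + 1) / 2) \<noteq> 0" using g1 g2 by (metis less_irrefl)+
    show ?thesis using t g1 g2 g1' g2' by (simp add: gconst ennreal_mult[symmetric])
  qed
  finally show "emeasure (student_t t) (space (student_t t)) = 1" .
qed

lemma pmin_pos: "t \<ge> 1 \<Longrightarrow> p_min t a y > 0"
  unfolding p_min_def using gp_pos by simp

lemma int_pmin:
  assumes t: "t \<ge> 1" and a: "a > 0"
  shows "(\<integral>\<^sup>+y. ennreal (p_min t a y) \<partial>lborel) = ennreal (beta_const t a)"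
proof -
  interpret M: prob_space "student_t t" by (rule student_prob[OF t])
  define h where "h = h_fun t a"
  define B where "B = 1 + a\<^sup>2 / real t"
  have B: "B \<ge> 1" by (simp add: B_def)
  define r where "r = sqrt B"
  have r: "r > 0" using B by (simp add: r_def)
  have Br: "B powr (-1/2) = 1 / r"
  proof -
    have "B powr (-1/2) = B powr (-(1/2))" by simp
    also have "\<dots> = inverse (B powr (1/2))" by (rule powr_minus)
    also have "\<dots> = 1 / r" using B by (simp add: r_def powr_half_sqrt inverse_eq_divide)
    finally show ?thesis .
  qed
  define h' where "h' = B powr (-1/2) * h"
  have sp: "space (student_t t) = UNIV" by (simp add: student_t_def)
  have sets: "sets (student_t t) = sets borel" by (simp add: student_t_def)
  have em: "emeasure (student_t t) S = (\<integral>\<^sup>+y. ennreal (student_t_density t y) * indicator S y \<partial>lborel)"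
    if "S \<in> sets borel" for S
    using that unfolding student_t_def by (simp add: emeasure_density)
  have S1[measurable]: "{y::real. \<bar>y\<bar> \<le> c} \<in> sets borel" for c by measurable
  have S2[measurable]: "{y::real. c < \<bar>y\<bar>} \<in> sets borel" for c by measurable
  have split: "ennreal (p_min t a y) = ennreal (indicator {y. \<bar>y\<bar> \<le> h} y * (B powr (-1/2) * student_t_density t (y / r)))
      + ennreal (student_t_density t y) * indicator {y. h < \<bar>y\<bar>} y" for y
    unfolding p_min_def h_def[symmetric] using gpa[OF t, of a y] gp0'[OF t, of y]
    by (auto simp: indicator_def B_def r_def)
  have "(\<integral>\<^sup>+y. ennreal (p_min t a y) \<partial>lborel)
     = (\<integral>\<^sup>+y. ennreal (indicator {y. \<bar>y\<bar> \<le> h} y * (B powr (-1/2) * student_t_density t (y / r))) \<partial>lborel)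
     + (\<integral>\<^sup>+y. ennreal (student_t_density t y) * indicator {y. h < \<bar>y\<bar>} y \<partial>lborel)"
    unfolding split by (rule nn_integral_add) auto
  also have "(\<integral>\<^sup>+y. ennreal (student_t_density t y) * indicator {y. h < \<bar>y\<bar>} y \<partial>lborel)
      = emeasure (student_t t) {y. h < \<bar>y\<bar>}" by (simp add: em)
  also have "(\<integral>\<^sup>+y. ennreal (indicator {y. \<bar>y\<bar> \<le> h} y * (B powr (-1/2) * student_t_density t (y / r))) \<partial>lborel)
      = ennreal \<bar>r\<bar> * (\<integral>\<^sup>+z. ennreal (indicator {y. \<bar>y\<bar> \<le> h} (0 + r * z) * (B powr (-1/2) * student_t_density t ((0 + r * z) / r))) \<partial>lborel)"
    by (rule nn_integral_real_affine) (use r in auto)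
  also have "\<dots> = (\<integral>\<^sup>+z. ennreal r * ennreal (indicator {y. \<bar>y\<bar> \<le> h} (0 + r * z) * (B powr (-1/2) * student_t_density t ((0 + r * z) / r))) \<partial>lborel)"
    using r by (subst nn_integral_cmult) auto
  also have "\<dots> = (\<integral>\<^sup>+z. ennreal (student_t_density t z) * indicator {y. \<bar>y\<bar> \<le> h'} z \<partial>lborel)"
  proof (intro nn_integral_cong)
    fix z
    have i: "\<bar>r * z\<bar> \<le> h \<longleftrightarrow> \<bar>z\<bar> \<le> h'"
      unfolding h'_def Br using r by (simp add: abs_mult field_simps)
    have rB: "r * (B powr (-1/2)) = 1" using r unfolding Br by simp
    have e1: "(0 + r * z) / r = z" using r by simp
    have e2: "ennreal r * ennreal (B powr (-1/2) * student_t_density t z) = ennreal (student_t_density t z)"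
    proof -
      have "ennreal r * ennreal (B powr (-1/2) * student_t_density t z) = ennreal (r * (B powr (-1/2) * student_t_density t z))"
        using r by (subst ennreal_mult') auto
      also have "r * (B powr (-1/2) * student_t_density t z) = student_t_density t z"
        using rB by (simp add: mult.assoc[symmetric])
      finally show ?thesis .
    qed
    show "ennreal r * ennreal (indicator {y. \<bar>y\<bar> \<le> h} (0 + r * z) * (B powr (-1/2) * student_t_density t ((0 + r * z) / r)))
      = ennreal (student_t_density t z) * indicator {y. \<bar>y\<bar> \<le> h'} z"
      unfolding e1 using i e2 by (cases "\<bar>z\<bar> \<le> h'") (auto simp: indicator_def)
  qed
  also have "\<dots> = emeasure (student_t t) {y. \<bar>y\<bar> \<le> h'}" by (simp add: em)
  finally have I: "(\<integral>\<^sup>+y. ennreal (p_min t a y) \<partial>lborel)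
      = emeasure (student_t t) {y. \<bar>y\<bar> \<le> h'} + emeasure (student_t t) {y. h < \<bar>y\<bar>}" .
  have compl: "measure (student_t t) {y. h < \<bar>y\<bar>} = 1 - measure (student_t t) {y. \<bar>y\<bar> \<le> h}"
  proof -
    have "{y. h < \<bar>y\<bar>} = space (student_t t) - {y. \<bar>y\<bar> \<le> h}" using sp by auto
    then show ?thesis using M.prob_compl[of "{y. \<bar>y\<bar> \<le> h}"] sets by simp
  qed
  have "beta_const t a = measure (student_t t) {y. \<bar>y\<bar> \<le> h'} + measure (student_t t) {y. h < \<bar>y\<bar>}"
  proof -
    have "beta_const t a = 1 - measure (student_t t) {y. \<bar>y\<bar> \<le> h} + measure (student_t t) {y. \<bar>y\<bar> \<le> h'}"
      unfolding beta_const_def h'_def h_def B_def by simp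
    then show ?thesis using compl by simp
  qed
  then show ?thesis unfolding I M.emeasure_eq_measure
    by (simp only:) (intro ennreal_plus[symmetric] measure_nonneg)
qed

lemma beta_pos:
  assumes t: "t \<ge> 1" and a: "a > 0"
  shows "beta_const t a > 0"
proof (rule ccontr)
  assume "\<not> beta_const t a > 0"
  then have "ennreal (beta_const t a) = 0" by (simp add: ennreal_eq_0_iff)
  then have "(\<integral>\<^sup>+y. ennreal (p_min t a y) \<partial>lborel) = 0" using int_pmin[OF t a] by simp
  then have "AE y in lborel. ennreal (p_min t a y) = 0" by (subst (asm) nn_integral_0_iff_AE) auto
  moreover have "\<And>y. ennreal (p_min t a y) \<noteq> 0" using pmin_pos[OF t, of a] by (simp add: ennreal_eq_0_iff not_le)
  ultimately have "AE (y::real) in lborel. False" by simp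
  then have "ae_filter (lborel::real measure) = bot" using trivial_limit_def by blast
  then show False by (simp add: ae_filter_eq_bot_iff)
qed

theorem proposition7p2:
  fixes t :: nat and a :: real
  assumes "t \<ge> 1" and "a > 0"
  shows "(\<forall>x y. \<bar>x\<bar> \<le> a \<longrightarrow> gibbs_p t x y \<ge> p_min t a y)
    \<and> prob_space (nu_meas t a)
    \<and> (\<forall>x. \<forall>A \<in> sets borel.
           emeasure (gibbs_kernel t x) A
             \<ge> ennreal (beta_const t a) * indicator {-a..a} x * emeasure (nu_meas t a) A)"
proof (intro conjI allI impI ballI)
  note t = assms(1) and a = assms(2)
  have bpos: "beta_const t a > 0" by (rule beta_pos[OF t a])
  show "p_min t a y \<le> gibbs_p t x y" if "\<bar>x\<bar> \<le> a" for x y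
    by (rule pointwise[OF t a that])
  have nuI: "(\<integral>\<^sup>+y. ennreal (p_min t a y / beta_const t a) \<partial>lborel) = 1"
  proof -
    have "(\<integral>\<^sup>+y. ennreal (p_min t a y / beta_const t a) \<partial>lborel)
        = (\<integral>\<^sup>+y. ennreal (1 / beta_const t a) * ennreal (p_min t a y) \<partial>lborel)"
      using bpos pmin_pos[OF t] by (intro nn_integral_cong) (simp add: ennreal_mult[symmetric] less_imp_le)
    also have "\<dots> = ennreal (1 / beta_const t a) * ennreal (beta_const t a)"
      by (subst nn_integral_cmult) (auto simp: int_pmin[OF t a])
    also have "\<dots> = 1" using bpos by (simp add: ennreal_mult[symmetric])
    finally show ?thesis .
  qed
  show "prob_space (nu_meas t a)"
  proof (rule prob_spaceI)
    show "emeasure (nu_meas t a) (space (nu_meas t a)) = 1"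
      unfolding nu_meas_def using nuI by (simp add: emeasure_density)
  qed
  fix x :: real and A :: "real set"
  assume A: "A \<in> sets borel"
  show "ennreal (beta_const t a) * indicator {-a..a} x * emeasure (nu_meas t a) A \<le> emeasure (gibbs_kernel t x) A"
  proof (cases "x \<in> {-a..a}")
    case False
    then show ?thesis by simp
  next
    case True
    then have x: "\<bar>x\<bar> \<le> a" by auto
    have "ennreal (beta_const t a) * indicator {-a..a} x * emeasure (nu_meas t a) A
        = ennreal (beta_const t a) * (\<integral>\<^sup>+y. ennreal (p_min t a y / beta_const t a) * indicator A y \<partial>lborel)"
      using True A unfolding nu_meas_def by (simp add: emeasure_density)
    also have "\<dots> = (\<integral>\<^sup>+y. ennreal (beta_const t a) * (ennreal (p_min t a y / beta_const t a) * indicator A y) \<partial>lborel)"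
      using A by (subst nn_integral_cmult) auto
    also have "\<dots> = (\<integral>\<^sup>+y. ennreal (p_min t a y) * indicator A y \<partial>lborel)"
      using bpos pmin_pos[OF t]
      by (intro nn_integral_cong) (simp add: mult.assoc[symmetric] ennreal_mult[symmetric] less_imp_le)
    also have "\<dots> \<le> (\<integral>\<^sup>+y. ennreal (gibbs_p t x y) * indicator A y \<partial>lborel)"
      using pointwise[OF t a x] by (intro nn_integral_mono) (auto simp: indicator_def intro: ennreal_leI)
    also have "\<dots> = emeasure (gibbs_kernel t x) A"
      using A unfolding gibbs_kernel_def by (simp add: emeasure_density)
    finally show ?thesis .
  qed
qed

end
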